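(* Let $\Sigma$ be an alphabet with at least three letters. If $f$ and $g$ are unary congruence preserving functions $\mathcal{T}(\Sigma)\to\mathcal{T}(\Sigma)$ such that $f(a)=g(a)$ for all $a\in\Sigma$, then $f(t)=g(t)$ for all $t\in\mathcal{T}(\Sigma)$.
   Context: Let $\Sigma$ be an alphabet not containing $0,1$. A binary tree over $\Sigma$ is a finite set $t \subseteq \{0,1\}^*\Sigma$ such that for any $ua, vb \in t$ with $ua \neq vb$, $u$ is not a prefix of $v$ and $v$ is not a prefix of $u$; $\mathcal{T}(\Sigma)$ is the set of such trees, $\mathbf 0=\emptyset$, each letter $a$ is identified with $\{a\}$, and $t\star t' = 0.t\cup 1.t'$. A congruence is an equivalence relation on $\mathcal{T}(\Sigma)$ compatible with $\star$. A function $f\colon\mathcal{T}(\Sigma)\to\mathcal{T}(\Sigma)$ is congruence preserving if for every congruence $\sim$, $t\sim t'$ implies $f(t)\sim f(t')$. *)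

theory Defs
  imports Main
begin

text \<open>A word u a with u in {0,1}* and a in Sigma is represented as a pair (u, a),
  where u :: bool list (False = 0, True = 1).\<close>

type_synonym 'a btree = "(bool list \<times> 'a) set"

definition is_prefix :: "bool list \<Rightarrow> bool list \<Rightarrow> bool" where
  "is_prefix u v \<longleftrightarrow> (\<exists>w. v = u @ w)"

definition is_tree :: "'a btree \<Rightarrow> bool" where
  "is_tree t \<longleftrightarrow> finite t \<and>
     (\<forall>u a v b. (u, a) \<in> t \<longrightarrow> (v, b) \<in> t \<longrightarrow> (u, a) \<noteq> (v, b) \<longrightarrow>
        \<not> is_prefix u v \<and> \<not> is_prefix v u)"

definition trees :: "'a btree set" where
  "trees = {t. is_tree t}"

definition leaf :: "'a \<Rightarrow> 'a btree" where
  "leaf a = {([], a)}"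

definition star :: "'a btree \<Rightarrow> 'a btree \<Rightarrow> 'a btree" where
  "star t t' = (\<lambda>(u, a). (False # u, a)) ` t \<union> (\<lambda>(u, a). (True # u, a)) ` t'"

definition tree_congruence :: "('a btree \<times> 'a btree) set \<Rightarrow> bool" where
  "tree_congruence R \<longleftrightarrow> equiv trees R \<and>
     (\<forall>t1 t1' t2 t2'. (t1, t1') \<in> R \<longrightarrow> (t2, t2') \<in> R \<longrightarrow> (star t1 t2, star t1' t2') \<in> R)"

definition congruence_preserving :: "('a btree \<Rightarrow> 'a btree) \<Rightarrow> bool" where
  "congruence_preserving f \<longleftrightarrow> (\<forall>t \<in> trees. f t \<in> trees) \<and>
     (\<forall>R. tree_congruence R \<longrightarrow> (\<forall>t t'. (t, t') \<in> R \<longrightarrow> (f t, f t') \<in> R))"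

end

theory Submission
  imports Defs
begin

definition child :: "'a btree \<Rightarrow> bool \<Rightarrow> 'a btree" where
  "child s b = {(u, x). (b # u, x) \<in> s}"

definition mu :: "'a btree \<Rightarrow> nat" where
  "mu s = (\<Sum>w\<in>s. Suc (length (fst w)))"

lemma child_image: "(\<lambda>(u, x). (b # u, x)) ` child s b \<subseteq> s"
  by (auto simp: child_def)

lemma inj_cons_pair: "inj_on (\<lambda>(u, x). (b # u, x)) A"
  by (auto simp: inj_on_def)

lemma finite_child: "finite s \<Longrightarrow> finite (child s b)"
  by (meson child_image finite_imageD finite_subset inj_cons_pair)

lemma mu_child:
  assumes "finite s" "s \<noteq> {}"
  shows "mu (child s b) < mu s"
proof (cases "child s b = {}")
  case True
  have "0 < mu s" unfolding mu_def using assms by (simp add: sum_pos)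
  then show ?thesis using True by (simp add: mu_def)
next
  case False
  let ?g = "\<lambda>(u, x). (b # u, x)"
  let ?C = "child s b"
  have fC: "finite ?C" using finite_child assms by blast
  have "mu ?C = (\<Sum>w\<in>?g ` ?C. length (fst w))"
    unfolding mu_def by (subst sum.reindex[OF inj_cons_pair]) (auto intro!: sum.cong)
  also have "\<dots> < (\<Sum>w\<in>?g ` ?C. Suc (length (fst w)))"
    using False fC by (intro sum_strict_mono) auto
  also have "\<dots> \<le> (\<Sum>w\<in>s. Suc (length (fst w)))"
    using child_image assms by (intro sum_mono2) auto
  finally show ?thesis by (simp add: mu_def)
qed

lemma child_star_F[simp]: "child (star s r) False = s"
  by (auto simp: child_def star_def)

lemma child_star_T[simp]: "child (star s r) True = r"
  by (auto simp: child_def star_def)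

lemma star_empty_iff[simp]: "star s r = {} \<longleftrightarrow> s = {} \<and> r = {}"
  by (auto simp: star_def)

lemma star_empty[simp]: "star {} {} = {}"
  by (simp add: star_def)

lemma star_not_leaf[simp]: "star s r \<noteq> leaf x" "leaf x \<noteq> star s r"
  by (auto simp: star_def leaf_def)

lemma leaf_inj[simp]: "leaf x = leaf y \<longleftrightarrow> x = y"
  by (auto simp: leaf_def)

lemma star_inj: "star s r = star s' r' \<Longrightarrow> s = s' \<and> r = r'"
  by (metis child_star_F child_star_T)

lemma finite_star: "finite s \<Longrightarrow> finite r \<Longrightarrow> finite (star s r)"
  by (simp add: star_def)

lemma is_tree_star: "is_tree s \<Longrightarrow> is_tree r \<Longrightarrow> is_tree (star s r)"
  unfolding is_tree_def star_def is_prefix_def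
  apply (auto simp: finite_star)
  apply (metis append_self_conv prod.inject)+
  done

lemma is_tree_leaf: "is_tree (leaf x)"
  by (auto simp: is_tree_def leaf_def)

lemma is_tree_empty: "is_tree {}"
  by (auto simp: is_tree_def)

lemma is_tree_child: "is_tree s \<Longrightarrow> is_tree (child s b)"
  unfolding is_tree_def
proof (intro conjI allI impI)
  assume h: "finite s \<and> (\<forall>u a v b. (u, a) \<in> s \<longrightarrow> (v, b) \<in> s \<longrightarrow> (u, a) \<noteq> (v, b) \<longrightarrow>
        \<not> is_prefix u v \<and> \<not> is_prefix v u)"
  then show "finite (child s b)" using finite_child by blast
  fix u a v c
  assume "(u, a) \<in> child s b" "(v, c) \<in> child s b" "(u, a) \<noteq> (v, c)"
  then have "(b#u, a) \<in> s" "(b#v, c) \<in> s" "(b#u, a) \<noteq> (b#v, c)" by (auto simp: child_def)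
  then have "\<not> is_prefix (b#u) (b#v) \<and> \<not> is_prefix (b#v) (b#u)" using h by blast
  then show "\<not> is_prefix u v" "\<not> is_prefix v u" by (auto simp: is_prefix_def)
qed

lemma mem_star: "(v, y) \<in> star s r \<longleftrightarrow>
  (\<exists>u. v = False # u \<and> (u, y) \<in> s) \<or> (\<exists>u. v = True # u \<and> (u, y) \<in> r)"
  unfolding star_def by force

lemma tree_decomp:
  assumes "is_tree s"
  shows "s = {} \<or> (\<exists>x. s = leaf x) \<or>
    (s = star (child s False) (child s True) \<and> s \<noteq> {} \<and>
     is_tree (child s False) \<and> is_tree (child s True) \<and>
     mu (child s False) < mu s \<and> mu (child s True) < mu s)"
proof (cases "\<exists>x. ([], x) \<in> s")
  case hasroot: True
  then obtain x where x: "([], x) \<in> s" by blast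
  have "s = leaf x"
  proof -
    have "w = ([], x)" if "w \<in> s" for w
    proof (rule ccontr)
      assume ne: "w \<noteq> ([], x)"
      obtain v y where w: "w = (v, y)" by (cases w)
      have "is_prefix [] v" by (simp add: is_prefix_def)
      moreover have "\<not> is_prefix [] v"
      proof -
        have h: "\<forall>u a v b. (u, a) \<in> s \<longrightarrow> (v, b) \<in> s \<longrightarrow> (u, a) \<noteq> (v, b) \<longrightarrow>
          \<not> is_prefix u v \<and> \<not> is_prefix v u" using assms by (simp add: is_tree_def)
        have "(v, y) \<in> s" using that w by simp
        from h[rule_format, OF x this] ne w show ?thesis by blast
      qed
      ultimately show False by blast
    qed
    then show ?thesis using x unfolding leaf_def by blast
  qed
  then show ?thesis by blast
next
  case False
  have fin: "finite s" using assms by (simp add: is_tree_def)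
  have eq: "s = star (child s False) (child s True)"
  proof (rule set_eqI)
    fix w show "w \<in> s \<longleftrightarrow> w \<in> star (child s False) (child s True)"
    proof (cases w)
      case (Pair u x)
      show ?thesis
      proof (cases u)
        case Nil
        then show ?thesis using False Pair by (simp add: mem_star)
      next
        case (Cons c u')
        then show ?thesis using Pair by (cases c) (simp_all add: mem_star child_def)
      qed
    qed
  qed
  show ?thesis
  proof (cases "s = {}")
    case emp: True then show ?thesis by (intro disjI1)
  next
    case ne: False
    have "s = star (child s False) (child s True) \<and> s \<noteq> {} \<and>
     is_tree (child s False) \<and> is_tree (child s True) \<and>
     mu (child s False) < mu s \<and> mu (child s True) < mu s"
      using eq ne is_tree_child[OF assms] mu_child[OF fin ne] by simp
    then show ?thesis by (intro disjI2)
  qed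
qed


definition gfire :: "'a btree \<Rightarrow> 'a \<Rightarrow> 'a btree \<Rightarrow> 'a btree" where
  "gfire t c P = (if P = t then leaf c else P)"

function rw :: "'a btree \<Rightarrow> 'a \<Rightarrow> 'a btree \<Rightarrow> 'a btree" where
  "rw t c s = (if infinite s \<or> s = {} then {} else if (\<exists>x. s = leaf x) then s else
     gfire t c (star (rw t c (child s False)) (rw t c (child s True))))"
  by pat_completeness auto
termination by (relation "measure (\<lambda>(t, c, s). mu s)") (auto simp: mu_child)

declare rw.simps[simp del]

lemma rw_empty[simp]: "rw t c {} = {}"
  by (subst rw.simps) simp

lemma rw_leaf[simp]: "rw t c (leaf x) = leaf x"
  by (subst rw.simps) (auto simp: leaf_def)

lemma rw_star:
  assumes "finite s0" "finite s1" "t \<noteq> {}"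
  shows "rw t c (star s0 s1) = gfire t c (star (rw t c s0) (rw t c s1))"
proof (cases "s0 = {} \<and> s1 = {}")
  case True
  then show ?thesis using assms by (simp add: gfire_def)
next
  case False
  have ne: "\<not> (infinite (star s0 s1) \<or> star s0 s1 = {})" using False assms finite_star by auto
  have nl: "\<not> (\<exists>x. star s0 s1 = leaf x)" by simp
  show ?thesis by (subst rw.simps) (simp only: ne nl if_False child_star_F child_star_T)
qed

lemma rw_id:
  assumes "t \<noteq> {}"
  shows "is_tree s \<Longrightarrow> mu s < mu t \<Longrightarrow> rw t c s = s"
proof (induction s rule: measure_induct_rule[of mu])
  case (less s)
  from tree_decomp[OF less.prems(1)] show ?case
  proof (elim disjE exE conjE)
    assume "s = {}" then show ?thesis by simp
  next
    fix x assume "s = leaf x" then show ?thesis by simp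
  next
    assume e: "s = star (child s False) (child s True)" and ne: "s \<noteq> {}"
      and t0: "is_tree (child s False)" and t1: "is_tree (child s True)"
      and m0: "mu (child s False) < mu s" and m1: "mu (child s True) < mu s"
    have r0: "rw t c (child s False) = child s False" using less.IH[OF m0 t0] m0 less.prems by simp
    have r1: "rw t c (child s True) = child s True" using less.IH[OF m1 t1] m1 less.prems by simp
    have f0: "finite (child s False)" "finite (child s True)" using t0 t1 by (auto simp: is_tree_def)
    have "rw t c s = gfire t c s"
      using rw_star[OF f0 assms, of c] r0 r1 e by metis
    moreover have "s \<noteq> t" using less.prems by auto
    ultimately show ?thesis by (simp add: gfire_def)
  qed
qed

lemma rw_t:
  assumes "is_tree t" "t \<noteq> {}" "\<forall>x. t \<noteq> leaf x"
  shows "rw t c t = leaf c"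
proof -
  from tree_decomp[OF assms(1)] assms(2,3) have
    e: "t = star (child t False) (child t True)" and
    t0: "is_tree (child t False)" and t1: "is_tree (child t True)" and
    m0: "mu (child t False) < mu t" and m1: "mu (child t True) < mu t" by auto
  have f0: "finite (child t False)" "finite (child t True)" using t0 t1 by (auto simp: is_tree_def)
  have "rw t c t = gfire t c (star (rw t c (child t False)) (rw t c (child t True)))"
    using rw_star[OF f0 assms(2), of c] e by metis
  also have "\<dots> = gfire t c t" using rw_id[OF assms(2) t0 m0] rw_id[OF assms(2) t1 m1] e by metis
  finally show ?thesis by (simp add: gfire_def)
qed

lemma gfire_star_cases: "gfire t c (star a b) = leaf c \<or> gfire t c (star a b) = star a b"
  by (simp add: gfire_def)

lemma gfire_inj: "gfire t c (star a b) = gfire t c (star a' b') \<Longrightarrow> star a b = star a' b'"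
  by (auto simp: gfire_def split: if_splits)

lemma gfire_empty: "gfire t c P = {} \<Longrightarrow> P = {}"
  unfolding gfire_def leaf_def by (cases "P = t") auto

lemma rw_ne:
  assumes "t \<noteq> {}"
  shows "is_tree s \<Longrightarrow> rw t c s = {} \<Longrightarrow> s = {}"
proof (induction s rule: measure_induct_rule[of mu])
  case (less s)
  from tree_decomp[OF less.prems(1)] show ?case
  proof (elim disjE exE conjE)
    assume "s = {}" then show ?thesis by simp
  next
    fix x assume sx: "s = leaf x"
    have "leaf x \<noteq> {}" by (simp add: leaf_def)
    then show ?thesis using less.prems(2) sx by simp
  next
    assume e: "s = star (child s False) (child s True)" and ne: "s \<noteq> {}"
      and t0: "is_tree (child s False)" and t1: "is_tree (child s True)"
      and m0: "mu (child s False) < mu s" and m1: "mu (child s True) < mu s"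
    have f0: "finite (child s False)" "finite (child s True)" using t0 t1 by (auto simp: is_tree_def)
    have "rw t c s = gfire t c (star (rw t c (child s False)) (rw t c (child s True)))"
      using rw_star[OF f0 assms, of c] e by metis
    then have "star (rw t c (child s False)) (rw t c (child s True)) = {}"
      using less.prems(2) gfire_empty by metis
    then have "child s False = {}" "child s True = {}"
      using less.IH[OF m0 t0] less.IH[OF m1 t1] by auto
    then show ?thesis using e by simp
  qed
qed

lemma rw_prod:
  assumes "t \<noteq> {}" "is_tree s" "s = star (child s False) (child s True)"
  shows "rw t c s = gfire t c (star (rw t c (child s False)) (rw t c (child s True)))"
proof -
  have t0: "is_tree (child s False)" "is_tree (child s True)" using is_tree_child assms by auto
  have f0: "finite (child s False)" "finite (child s True)" using t0 by (auto simp: is_tree_def)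
  show ?thesis using rw_star[OF f0 assms(1), of c] assms(3) by metis
qed

lemma rw_inj:
  assumes "t \<noteq> {}" "a \<noteq> b"
  shows "is_tree u \<Longrightarrow> is_tree v \<Longrightarrow> rw t a u = rw t a v \<Longrightarrow> rw t b u = rw t b v \<Longrightarrow> u = v"
proof (induction u arbitrary: v rule: measure_induct_rule[of mu])
  case (less u)
  note tu = less.prems(1) and tv = less.prems(2) and ea = less.prems(3) and eb = less.prems(4)
  show ?case
  proof (cases "u = {} \<or> v = {}")
    case True
    then show ?thesis using rw_ne[OF assms(1)] tu tv ea by (metis rw_empty)
  next
    case False
    then have une: "u \<noteq> {}" and vne: "v \<noteq> {}" by auto
    show ?thesis
    proof (cases "\<exists>x. u = leaf x")
      case ul: True
      then obtain x where ux: "u = leaf x" by blast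
      show ?thesis
      proof (cases "\<exists>y. v = leaf y")
        case True
        then obtain y where "v = leaf y" by blast
        then show ?thesis using ux ea by simp
      next
        case vnl: False
        then have ev: "v = star (child v False) (child v True)" using tree_decomp[OF tv] vne by blast
        have "leaf x = leaf a" using ea ux rw_prod[OF assms(1) tv ev, of a]
          gfire_star_cases[of t a] by (metis rw_leaf star_not_leaf(1))
        moreover have "leaf x = leaf b" using eb ux rw_prod[OF assms(1) tv ev, of b]
          gfire_star_cases[of t b] by (metis rw_leaf star_not_leaf(1))
        ultimately show ?thesis using assms(2) by simp
      qed
    next
      case unl: False
      then have eu: "u = star (child u False) (child u True)"
        and t0: "is_tree (child u False)" and t1: "is_tree (child u True)"
        and m0: "mu (child u False) < mu u" and m1: "mu (child u True) < mu u"
        using tree_decomp[OF tu] une by blast+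
      show ?thesis
      proof (cases "\<exists>y. v = leaf y")
        case True
        then obtain y where vy: "v = leaf y" by blast
        have "leaf y = leaf a" using ea vy rw_prod[OF assms(1) tu eu, of a]
          gfire_star_cases[of t a] by (metis rw_leaf star_not_leaf(1))
        moreover have "leaf y = leaf b" using eb vy rw_prod[OF assms(1) tu eu, of b]
          gfire_star_cases[of t b] by (metis rw_leaf star_not_leaf(1))
        ultimately show ?thesis using assms(2) by simp
      next
        case vnl: False
        then have ev: "v = star (child v False) (child v True)"
          and s0: "is_tree (child v False)" and s1: "is_tree (child v True)"
          using tree_decomp[OF tv] vne by blast+
        have "star (rw t a (child u False)) (rw t a (child u True)) =
              star (rw t a (child v False)) (rw t a (child v True))"
          using ea rw_prod[OF assms(1) tu eu, of a] rw_prod[OF assms(1) tv ev, of a]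
          by (metis gfire_inj)
        then have ha: "rw t a (child u False) = rw t a (child v False)"
          "rw t a (child u True) = rw t a (child v True)" using star_inj by blast+
        have "star (rw t b (child u False)) (rw t b (child u True)) =
              star (rw t b (child v False)) (rw t b (child v True))"
          using eb rw_prod[OF assms(1) tu eu, of b] rw_prod[OF assms(1) tv ev, of b]
          by (metis gfire_inj)
        then have hb: "rw t b (child u False) = rw t b (child v False)"
          "rw t b (child u True) = rw t b (child v True)" using star_inj by blast+
        have "child u False = child v False" using less.IH[OF m0 t0 s0 ha(1) hb(1)] .
        moreover have "child u True = child v True" using less.IH[OF m1 t1 s1 ha(2) hb(2)] .
        ultimately show ?thesis using eu ev by metis
      qed
    qed
  qed
qed


lemma kernel_cong:
  assumes hom: "\<And>s r. s \<in> trees \<Longrightarrow> r \<in> trees \<Longrightarrow> H (star s r) = op (H s) (H r)"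
  shows "tree_congruence {(s, s'). s \<in> trees \<and> s' \<in> trees \<and> H s = H s'}"
  unfolding tree_congruence_def equiv_def refl_on_def sym_def trans_def
  using hom by (auto simp: trees_def is_tree_star)

lemma cp_kernel:
  assumes cp: "congruence_preserving f"
    and hom: "\<And>s r. s \<in> trees \<Longrightarrow> r \<in> trees \<Longrightarrow> H (star s r) = op (H s) (H r)"
    and "s \<in> trees" "s' \<in> trees" "H s = H s'"
  shows "H (f s) = H (f s')"
proof -
  let ?R = "{(s, s'). s \<in> trees \<and> s' \<in> trees \<and> H s = H s'}"
  have "tree_congruence ?R" by (rule kernel_cong[of H op, OF hom])
  moreover have "(s, s') \<in> ?R" using assms by simp
  ultimately have "(f s, f s') \<in> ?R" using cp unfolding congruence_preserving_def by blast
  then show ?thesis by simp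
qed

definition del :: "'a \<Rightarrow> 'a btree \<Rightarrow> 'a btree" where
  "del c s = {w \<in> s. snd w \<noteq> c}"

lemma del_star: "del c (star s r) = star (del c s) (del c r)"
  unfolding del_def star_def by auto

lemma del_inj:
  assumes "a \<noteq> b" "del a u = del a v" "del b u = del b v"
  shows "u = v"
proof (rule set_eqI)
  fix w
  show "w \<in> u \<longleftrightarrow> w \<in> v"
  proof (cases "snd w = a")
    case True
    then have "snd w \<noteq> b" using assms(1) by simp
    then show ?thesis using assms(3) unfolding del_def by blast
  next
    case False
    then show ?thesis using assms(2) unfolding del_def by blast
  qed
qed

lemma rw_hom:
  assumes "t \<noteq> {}"
  shows "s \<in> trees \<Longrightarrow> r \<in> trees \<Longrightarrow> rw t c (star s r) = gfire t c (star (rw t c s) (rw t c r))"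
  using assms by (intro rw_star) (auto simp: trees_def is_tree_def)

theorem mainTheorem4:
  fixes f g :: "('a::finite) btree \<Rightarrow> 'a btree"
  assumes "card (UNIV :: 'a set) \<ge> 3"
    and "congruence_preserving f"
    and "congruence_preserving g"
    and "\<forall>a. f (leaf a) = g (leaf a)"
  shows "\<forall>t \<in> trees. f t = g t"
proof
  fix t :: "'a btree"
  assume tt: "t \<in> trees"
  obtain a b :: 'a where ab: "a \<noteq> b"
  proof -
    have "\<not> (\<forall>x y :: 'a. x = y)"
    proof
      assume "\<forall>x y :: 'a. x = y"
      then have eqU: "(UNIV :: 'a set) = {undefined}" by blast
      have "card (UNIV :: 'a set) \<le> 1" by (simp only: eqU) simp
      then show False using assms(1) by simp
    qed
    then show ?thesis using that by blast
  qed
  have leaft: "leaf x \<in> trees" for x :: 'a by (simp add: trees_def is_tree_leaf)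
  have ft: "f t \<in> trees" "g t \<in> trees" using assms(2,3) tt unfolding congruence_preserving_def by blast+
  show "f t = g t"
  proof (cases "t = {}")
    case True
    have "del c (f t) = del c (g t)" for c
    proof -
      have hom: "\<And>s r. s \<in> trees \<Longrightarrow> r \<in> trees \<Longrightarrow> del c (star s r) = star (del c s) (del c r)"
        by (rule del_star)
      have e: "del c t = del c (leaf c)" using True by (simp add: del_def leaf_def)
      have "del c (f t) = del c (f (leaf c))" by (rule cp_kernel[OF assms(2) hom tt leaft e])
      also have "\<dots> = del c (g (leaf c))" using assms(4) by simp
      also have "\<dots> = del c (g t)" by (rule cp_kernel[OF assms(3) hom leaft tt e[symmetric]])
      finally show ?thesis .
    qed
    then show ?thesis using del_inj[OF ab] by blast
  next
    case tne: False
    show ?thesis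
    proof (cases "\<exists>x. t = leaf x")
      case True
      then show ?thesis using assms(4) by auto
    next
      case False
      have it: "is_tree t" using tt by (simp add: trees_def)
      have "rw t c (f t) = rw t c (g t)" for c
      proof -
        note hom = rw_hom[OF tne, of _ _ c]
        have e: "rw t c t = rw t c (leaf c)" using rw_t[OF it tne] False by simp
        have "rw t c (f t) = rw t c (f (leaf c))" by (rule cp_kernel[OF assms(2) hom tt leaft e])
        also have "\<dots> = rw t c (g (leaf c))" using assms(4) by simp
        also have "\<dots> = rw t c (g t)" by (rule cp_kernel[OF assms(3) hom leaft tt e[symmetric]])
        finally show ?thesis .
      qed
      then show ?thesis using rw_inj[OF tne ab] ft by (simp add: trees_def)
    qed
  qed
qed

end
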